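(* Assume (A1)–(A3) and (SH), and let $z_t$ be defined by $x_0:=x_1$, $z_t=x_t+\frac{\beta_{1,t}}{1-\beta_{1,t}}(x_t-x_{t-1})$. Then for every $t\ge1$, $\mathbb{E}[f(z_{t+1})-f(z_1)]\le T_1+T_2+T_3+T_4+T_5+T_6$, where $T_1=-\mathbb{E}\big[\sum_{i=1}^t\langle\nabla f(z_i),\frac{\beta_{1,i}}{1-\beta_{1,i}}(\frac{\alpha_i}{\sqrt{\hat v_i}}-\frac{\alpha_{i-1}}{\sqrt{\hat v_{i-1}}})\odot m_{i-1}\rangle\big]$, $T_2=-\mathbb{E}\big[\sum_{i=1}^t\alpha_i\langle\nabla f(z_i),g_i/\sqrt{\hat v_i}\rangle\big]$, $T_3=-\mathbb{E}\big[\sum_{i=1}^t\langle\nabla f(z_i),(\frac{\beta_{1,i+1}}{1-\beta_{1,i+1}}-\frac{\beta_{1,i}}{1-\beta_{1,i}})\alpha_im_i/\sqrt{\hat v_i}\rangle\big]$, $T_4=\mathbb{E}\big[\sum_{i=1}^t\frac32L\|(\frac{\beta_{1,i+1}}{1-\beta_{1,i+1}}-\frac{\beta_{1,i}}{1-\beta_{1,i}})\alpha_im_i/\sqrt{\hat v_i}\|^2\big]$, $T_5=\mathbb{E}\big[\sum_{i=1}^t\frac32L\|\frac{\beta_{1,i}}{1-\beta_{1,i}}(\frac{\alpha_i}{\sqrt{\hat v_i}}-\frac{\alpha_{i-1}}{\sqrt{\hat v_{i-1}}})\odot m_{i-1}\|^2\big]$, $T_6=\mathbb{E}\big[\sum_{i=1}^t\frac32L\|\alpha_ig_i/\sqrt{\hat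 v_i}\|^2\big]$.
   Context: Problem: minimize $f(x)=\mathbb{E}_\xi[f(x;\xi)]$ over $x\in\mathbb{R}^d$. All vector operations (division, square root, squaring) are coordinatewise, $\odot$ is the coordinatewise product, $\|\cdot\|$ is the Euclidean norm. Generalized Adam: given $x_1\in\mathbb{R}^d$, stepsizes $\alpha_t>0$, momentum parameters $\beta_{1,t}\in[0,1)$ and maps $h_t$, set $m_0=0$ and for $t=1,2,\dots$: $m_t=\beta_{1,t}m_{t-1}+(1-\beta_{1,t})g_t$; $\hat v_t=h_t(g_1,\dots,g_t)\in\mathbb{R}^d$ with strictly positive entries; $x_{t+1}=x_t-\alpha_t m_t/\sqrt{\hat v_t}$, where $g_t$ is a stochastic gradient evaluated at $x_t$. By convention $(\alpha_1/\sqrt{\hat v_1}-\alpha_0/\sqrt{\hat v_0})\odot m_0=0$ (the $i=1$ terms of $T_1$ and $T_5$ vanish). Assumptions: (A1) $f$ is differentiable, $\|\nabla f(x)-\nabla f(y)\|\le L\|x-y\|$ for all $x,y$, and $f$ attains its minimum at some $x^*$ with $f(x^* )>-\infty$. (A2) $\|\nabla f(x)\|\le H$ for all $x$ and $\|g_t\|\le H$ for all $t$ almost surely. (A3) $g_t=\nabla f(x_t)+\zeta_t$ where the noise $\zeta_t$ has zero mean conditionally on $g_1,\dots,g_{t-1}$. Expectations are over all randomness in $\{g_t\}$. Standing hypotheses (SH): $\beta_1\in[0,1)$ with $\beta_{1,t}\le\beta_1$ for all $t$, the sequence $\beta_{1,t}\in[0,1)$ is non-increasing, and there is $G>0$ with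 $\|\alpha_t m_t/\sqrt{\hat v_t}\|\le G$ for all $t$ almost surely. *)

theory Defs
  imports "HOL-Probability.Probability"
begin

definition vmul :: "real^'n \<Rightarrow> real^'n \<Rightarrow> real^'n" where
  "vmul a b = (\<chi> i. a $ i * b $ i)"

definition vdiv :: "real^'n \<Rightarrow> real^'n \<Rightarrow> real^'n" where
  "vdiv a b = (\<chi> i. a $ i / b $ i)"

definition vsqrt :: "real^'n \<Rightarrow> real^'n" where
  "vsqrt a = (\<chi> i. sqrt (a $ i))"

text \<open>Generalized Adam, computed pathwise from a sequence gs of stochastic gradients
  (gs t = g_t, t >= 1).  beta t = beta_{1,t}, alpha t = alpha_t, h t = h_t.\<close>

primrec adam_m :: "(nat \<Rightarrow> real) \<Rightarrow> (nat \<Rightarrow> real^'n) \<Rightarrow> nat \<Rightarrow> real^'n" where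
  "adam_m beta gs 0 = 0"
| "adam_m beta gs (Suc t) = beta (Suc t) *\<^sub>R adam_m beta gs t + (1 - beta (Suc t)) *\<^sub>R gs (Suc t)"

definition adam_v :: "(nat \<Rightarrow> (real^'n) list \<Rightarrow> real^'n) \<Rightarrow> (nat \<Rightarrow> real^'n) \<Rightarrow> nat \<Rightarrow> real^'n" where
  "adam_v h gs t = h t (map gs [1..<Suc t])"

definition adam_rate :: "(nat \<Rightarrow> real) \<Rightarrow> (nat \<Rightarrow> (real^'n) list \<Rightarrow> real^'n) \<Rightarrow> (nat \<Rightarrow> real^'n) \<Rightarrow> nat \<Rightarrow> real^'n" where
  "adam_rate alpha h gs t = (\<chi> j. alpha t / sqrt (adam_v h gs t $ j))"

text \<open>Iterates: x_0 := x_1 (convention used for z_t), x_1 given,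
  x_{t+1} = x_t - alpha_t m_t / sqrt(vhat_t).\<close>
fun adam_x :: "real^'n \<Rightarrow> (nat \<Rightarrow> real) \<Rightarrow> (nat \<Rightarrow> real) \<Rightarrow> (nat \<Rightarrow> (real^'n) list \<Rightarrow> real^'n)
                \<Rightarrow> (nat \<Rightarrow> real^'n) \<Rightarrow> nat \<Rightarrow> real^'n" where
  "adam_x x1 alpha beta h gs 0 = x1"
| "adam_x x1 alpha beta h gs (Suc 0) = x1"
| "adam_x x1 alpha beta h gs (Suc (Suc t)) =
     adam_x x1 alpha beta h gs (Suc t)
     - alpha (Suc t) *\<^sub>R vdiv (adam_m beta gs (Suc t)) (vsqrt (adam_v h gs (Suc t)))"

definition adam_z :: "real^'n \<Rightarrow> (nat \<Rightarrow> real) \<Rightarrow> (nat \<Rightarrow> real) \<Rightarrow> (nat \<Rightarrow> (real^'n) list \<Rightarrow> real^'n)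
                \<Rightarrow> (nat \<Rightarrow> real^'n) \<Rightarrow> nat \<Rightarrow> real^'n" where
  "adam_z x1 alpha beta h gs t =
     adam_x x1 alpha beta h gs t
     + (beta t / (1 - beta t)) *\<^sub>R (adam_x x1 alpha beta h gs t - adam_x x1 alpha beta h gs (t - 1))"

definition past_sigma :: "'a measure \<Rightarrow> (nat \<Rightarrow> 'a \<Rightarrow> real^'n) \<Rightarrow> nat \<Rightarrow> 'a measure" where
  "past_sigma M g t = sigma (space M)
     {g j -` B \<inter> space M | j B. j \<in> {1..<t} \<and> B \<in> sets borel}"

end

theory Submission
  imports Defs
begin

lemma meas_nth: "F \<in> borel_measurable M \<Longrightarrow> (\<lambda>\<omega>. (F \<omega> :: real^'n) $ i) \<in> borel_measurable M"
proof -
  assume F: "F \<in> borel_measurable M"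
  have "axis i (1::real) \<in> Basis" by (auto simp: Basis_vec_def)
  with borel_measurable_euclidean_space[THEN iffD1, OF F]
  have "(\<lambda>x. F x \<bullet> axis i 1) \<in> borel_measurable M" by blast
  then show ?thesis by (simp add: inner_axis)
qed

lemma meas_vec: "(\<And>i. (\<lambda>\<omega>. (F \<omega> :: real^'n) $ i) \<in> borel_measurable M) \<Longrightarrow> F \<in> borel_measurable M"
  apply (subst borel_measurable_euclidean_space)
  apply (auto simp: Basis_vec_def inner_axis)
  done

lemma meas_vdiv: "A \<in> borel_measurable M \<Longrightarrow> B \<in> borel_measurable M \<Longrightarrow>
   (\<lambda>\<omega>. vdiv (A \<omega>) (B \<omega> :: real^'n)) \<in> borel_measurable M"
  by (rule meas_vec) (simp add: vdiv_def meas_nth borel_measurable_divide)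

lemma meas_vmul: "A \<in> borel_measurable M \<Longrightarrow> B \<in> borel_measurable M \<Longrightarrow>
   (\<lambda>\<omega>. vmul (A \<omega>) (B \<omega> :: real^'n)) \<in> borel_measurable M"
  by (rule meas_vec) (simp add: vmul_def meas_nth borel_measurable_times)

lemma meas_vsqrt: "A \<in> borel_measurable M \<Longrightarrow>
   (\<lambda>\<omega>. vsqrt (A \<omega> :: real^'n)) \<in> borel_measurable M"
  by (rule meas_vec) (simp add: vsqrt_def measurable_compose[OF meas_nth borel_measurable_sqrt])

lemma norm3: "(norm (a + b + c :: 'b::real_normed_vector))\<^sup>2 \<le> 3 * ((norm a)\<^sup>2 + (norm b)\<^sup>2 + (norm c)\<^sup>2)"
proof -
  have n: "norm (a+b+c) \<le> norm a + norm b + norm c"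
    by (meson add_mono norm_triangle_ineq order_trans order_refl)
  have "(norm (a+b+c))\<^sup>2 \<le> (norm a + norm b + norm c)\<^sup>2"
    using n by (simp add: power_mono)
  also have "\<dots> \<le> 3 * ((norm a)\<^sup>2 + (norm b)\<^sup>2 + (norm c)\<^sup>2)"
  proof -
    have "0 \<le> (norm a - norm b)\<^sup>2 + (norm b - norm c)\<^sup>2 + (norm a - norm c)\<^sup>2" by simp
    then show ?thesis by (simp add: power2_eq_square algebra_simps)
  qed
  finally show ?thesis .
qed

lemma descent:
  fixes f :: "'b::real_inner \<Rightarrow> real"
  assumes grad: "\<And>x. (f has_derivative (\<lambda>v. Df x \<bullet> v)) (at x)"
    and lip: "\<And>x y. norm (Df x - Df y) \<le> L * norm (x - y)"
    and L: "0 \<le> L"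
  shows "f (x + d) \<le> f x + Df x \<bullet> d + L / 2 * (norm d)\<^sup>2"
proof -
  define \<phi> where "\<phi> s = f (x + s *\<^sub>R d) - s * (Df x \<bullet> d) - L / 2 * s\<^sup>2 * (norm d)\<^sup>2" for s
  have der: "(\<phi> has_real_derivative (Df (x + s *\<^sub>R d) \<bullet> d - Df x \<bullet> d - L * s * (norm d)\<^sup>2)) (at s)" for s
  proof -
    have l: "((\<lambda>s. x + s *\<^sub>R d) has_derivative (\<lambda>h. h *\<^sub>R d)) (at s)"
      by (auto intro!: derivative_eq_intros)
    have c: "((\<lambda>s. f (x + s *\<^sub>R d)) has_derivative (\<lambda>h. Df (x + s *\<^sub>R d) \<bullet> (h *\<^sub>R d))) (at s)"
      using has_derivative_compose[OF l grad] by (simp add: o_def)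
    have c2: "((\<lambda>s. f (x + s *\<^sub>R d)) has_real_derivative (Df (x + s *\<^sub>R d) \<bullet> d)) (at s)"
    proof -
      have e: "(\<lambda>h. Df (x + s *\<^sub>R d) \<bullet> (h *\<^sub>R d)) = (*) (Df (x + s *\<^sub>R d) \<bullet> d)"
        by (auto simp: fun_eq_iff)
      show ?thesis unfolding has_field_derivative_def using c by (simp only: e)
    qed
    show ?thesis unfolding \<phi>_def
      by (rule derivative_eq_intros c2 refl | simp)+
  qed
  have "\<phi> 1 \<le> \<phi> 0"
  proof (rule DERIV_nonpos_imp_nonincreasing[of 0 1 \<phi>])
    fix s :: real assume s: "0 \<le> s" "s \<le> 1"
    have "Df (x + s *\<^sub>R d) \<bullet> d - Df x \<bullet> d = (Df (x + s *\<^sub>R d) - Df x) \<bullet> d"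
      by (simp add: inner_diff_left)
    also have "\<dots> \<le> norm (Df (x + s *\<^sub>R d) - Df x) * norm d" by (rule norm_cauchy_schwarz)
    also have "\<dots> \<le> L * norm (s *\<^sub>R d) * norm d"
      using lip[of "x + s *\<^sub>R d" x] by (simp add: mult_right_mono)
    also have "\<dots> = L * s * (norm d)\<^sup>2" using s by (simp add: power2_eq_square)
    finally show "\<exists>y. (\<phi> has_real_derivative y) (at s) \<and> y \<le> 0"
      using der[of s] by (intro exI[of _ "Df (x + s *\<^sub>R d) \<bullet> d - Df x \<bullet> d - L * s * (norm d)\<^sup>2"]) auto
  qed simp
  then show ?thesis by (simp add: \<phi>_def)
qed

lemma x_diff:
  "adam_x x1 alpha beta h gs (Suc k) - adam_x x1 alpha beta h gs k
     = - vmul (adam_rate alpha h gs k) (adam_m beta gs k)"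
proof (cases k)
  case 0 then show ?thesis by (simp add: vmul_def vec_eq_iff)
next
  case (Suc k') then show ?thesis
    by (simp add: vmul_def vdiv_def vsqrt_def adam_rate_def vec_eq_iff)
qed

lemma alg:
  fixes X M0 G a s r0 q b :: real
  assumes "b \<noteq> 1"
  shows "(X - a / s * (b * M0 + (1 - b) * G)) + q * ((X - a / s * (b * M0 + (1 - b) * G)) - X)
     - (X + b / (1 - b) * (X - (X + r0 * M0)))
   = - (b / (1 - b) * ((a / s - r0) * M0)) - a * (G / s) - (q - b / (1 - b)) * (a * ((b * M0 + (1 - b) * G) / s))"
proof -
  define u where "u = b / (1 - b)"
  define r1 where "r1 = a / s"
  define m1 where "m1 = b * M0 + (1 - b) * G"
  have key: "(1 + u) * m1 = u * M0 + G"
  proof -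
    have "1 - b \<noteq> 0" using assms by simp
    then show ?thesis unfolding u_def m1_def by (simp add: field_simps)
  qed
  have e1: "a * (G / s) = r1 * G" "a * (m1 / s) = r1 * m1" unfolding r1_def by simp_all
  have "(X - r1 * m1) + q * ((X - r1 * m1) - X) - (X + u * (X - (X + r0 * M0)))
     = - (u * ((r1 - r0) * M0)) - r1 * G - (q - u) * (r1 * m1)"
  proof -
    have "r1 * ((1 + u) * m1) = r1 * (u * M0 + G)" using key by simp
    then show ?thesis by (simp add: algebra_simps)
  qed
  then show ?thesis unfolding u_def[symmetric] m1_def[symmetric] r1_def[symmetric] e1 .
qed

lemma z_step:
  assumes i: "1 \<le> i" and b: "beta i \<noteq> 1"
  shows "adam_z x1 alpha beta h gs (i + 1) - adam_z x1 alpha beta h gs i =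
    - ((beta i / (1 - beta i)) *\<^sub>R
         vmul (adam_rate alpha h gs i - adam_rate alpha h gs (i - 1)) (adam_m beta gs (i - 1)))
    - alpha i *\<^sub>R vdiv (gs i) (vsqrt (adam_v h gs i))
    - (beta (i + 1) / (1 - beta (i + 1)) - beta i / (1 - beta i)) *\<^sub>R
         (alpha i *\<^sub>R vdiv (adam_m beta gs i) (vsqrt (adam_v h gs i)))"
proof -
  obtain k where k: "i = Suc k" using i by (cases i) auto
  have d1: "adam_x x1 alpha beta h gs (Suc (Suc k)) - adam_x x1 alpha beta h gs (Suc k)
     = - vmul (adam_rate alpha h gs (Suc k)) (adam_m beta gs (Suc k))" by (rule x_diff)
  have d0: "adam_x x1 alpha beta h gs (Suc k) - adam_x x1 alpha beta h gs k
     = - vmul (adam_rate alpha h gs k) (adam_m beta gs k)" by (rule x_diff)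
  have b': "beta (Suc k) \<noteq> 1" using b k by simp
  have eqx: "adam_x x1 alpha beta h gs (Suc (Suc k)) = adam_x x1 alpha beta h gs (Suc k) - vmul (adam_rate alpha h gs (Suc k)) (adam_m beta gs (Suc k))"
    using d1 by (simp add: algebra_simps)
  have eqx0: "adam_x x1 alpha beta h gs k = adam_x x1 alpha beta h gs (Suc k) + vmul (adam_rate alpha h gs k) (adam_m beta gs k)"
    using d0 by (simp add: algebra_simps)
  show ?thesis
    unfolding k adam_z_def
    apply (simp only: Suc_eq_plus1[symmetric] diff_Suc_1)
    apply (simp only: eqx eqx0)
    apply (simp only: vec_eq_iff vmul_def vdiv_def vsqrt_def adam_rate_def adam_m.simps
       vector_minus_component vector_add_component vector_scaleR_component vec_lambda_beta
       vector_uminus_component real_scaleR_def)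
    apply (intro allI)
    apply (rule alg[OF b'])
    done
qed

lemma pathwise:
  fixes f :: "real^'n \<Rightarrow> real" and gs :: "nat \<Rightarrow> real^'n"
  assumes grad: "\<And>x. (f has_derivative (\<lambda>v. Df x \<bullet> v)) (at x)"
    and lip: "\<And>x y. norm (Df x - Df y) \<le> L * norm (x - y)"
    and L: "0 \<le> L"
    and bet: "\<And>s. 1 \<le> s \<Longrightarrow> beta s \<noteq> 1"
  shows "f (adam_z x1 alpha beta h gs (t + 1)) - f (adam_z x1 alpha beta h gs 1)
    \<le> - (\<Sum>i=1..t.
          Df (adam_z x1 alpha beta h gs i) \<bullet>
            ((beta i / (1 - beta i)) *\<^sub>R
               vmul (adam_rate alpha h gs i - adam_rate alpha h gs (i - 1))
                    (adam_m beta gs (i - 1))))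
      - (\<Sum>i=1..t.
          alpha i * (Df (adam_z x1 alpha beta h gs i) \<bullet>
            vdiv (gs i) (vsqrt (adam_v h gs i))))
      - (\<Sum>i=1..t.
          Df (adam_z x1 alpha beta h gs i) \<bullet>
            ((beta (i + 1) / (1 - beta (i + 1)) - beta i / (1 - beta i)) *\<^sub>R
               (alpha i *\<^sub>R vdiv (adam_m beta gs i) (vsqrt (adam_v h gs i)))))
      + (\<Sum>i=1..t.
          3 / 2 * L * (norm ((beta (i + 1) / (1 - beta (i + 1)) - beta i / (1 - beta i)) *\<^sub>R
               (alpha i *\<^sub>R vdiv (adam_m beta gs i) (vsqrt (adam_v h gs i)))))\<^sup>2)
      + (\<Sum>i=1..t.
          3 / 2 * L * (norm ((beta i / (1 - beta i)) *\<^sub>R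
               vmul (adam_rate alpha h gs i - adam_rate alpha h gs (i - 1))
                    (adam_m beta gs (i - 1))))\<^sup>2)
      + (\<Sum>i=1..t.
          3 / 2 * L * (norm (alpha i *\<^sub>R vdiv (gs i) (vsqrt (adam_v h gs i))))\<^sup>2)"
proof -
  let ?z = "adam_z x1 alpha beta h gs"
  define A where "A i = (beta i / (1 - beta i)) *\<^sub>R
               vmul (adam_rate alpha h gs i - adam_rate alpha h gs (i - 1)) (adam_m beta gs (i - 1))" for i
  define B where "B i = alpha i *\<^sub>R vdiv (gs i) (vsqrt (adam_v h gs i))" for i
  define C where "C i = (beta (i + 1) / (1 - beta (i + 1)) - beta i / (1 - beta i)) *\<^sub>R
               (alpha i *\<^sub>R vdiv (adam_m beta gs i) (vsqrt (adam_v h gs i)))" for i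
  have step: "f (?z (Suc i)) - f (?z i) \<le>
      - (Df (?z i) \<bullet> A i) - alpha i * (Df (?z i) \<bullet> vdiv (gs i) (vsqrt (adam_v h gs i)))
      - (Df (?z i) \<bullet> C i) + 3 / 2 * L * (norm (C i))\<^sup>2 + 3 / 2 * L * (norm (A i))\<^sup>2
      + 3 / 2 * L * (norm (B i))\<^sup>2" if i: "i \<in> {1..t}" for i
  proof -
    have zs: "?z (Suc i) = ?z i + (- A i - B i - C i)"
      using z_step[of i beta x1 alpha h gs] i bet[of i]
      unfolding A_def B_def C_def by (simp add: algebra_simps)
    have "f (?z (Suc i)) \<le> f (?z i) + Df (?z i) \<bullet> (- A i - B i - C i) + L / 2 * (norm (- A i - B i - C i))\<^sup>2"
      unfolding zs by (rule descent[OF grad lip L])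
    moreover have "(norm (- A i - B i - C i))\<^sup>2 \<le> 3 * ((norm (A i))\<^sup>2 + (norm (B i))\<^sup>2 + (norm (C i))\<^sup>2)"
    proof -
      have "norm (- A i - B i - C i) = norm (A i + B i + C i)"
        by (metis minus_diff_eq norm_minus_cancel diff_minus_eq_add add.commute diff_conv_add_uminus)
      then show ?thesis using norm3[of "A i" "B i" "C i"] by simp
    qed
    moreover have "Df (?z i) \<bullet> (- A i - B i - C i) = - (Df (?z i) \<bullet> A i) - alpha i * (Df (?z i) \<bullet> vdiv (gs i) (vsqrt (adam_v h gs i))) - (Df (?z i) \<bullet> C i)"
      unfolding B_def by (simp add: inner_diff_right)
    ultimately show ?thesis
    proof -
      assume a1: "f (?z (Suc i)) \<le> f (?z i) + Df (?z i) \<bullet> (- A i - B i - C i) + L / 2 * (norm (- A i - B i - C i))\<^sup>2"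
        and a2: "(norm (- A i - B i - C i))\<^sup>2 \<le> 3 * ((norm (A i))\<^sup>2 + (norm (B i))\<^sup>2 + (norm (C i))\<^sup>2)"
        and a3: "Df (?z i) \<bullet> (- A i - B i - C i) = - (Df (?z i) \<bullet> A i) - alpha i * (Df (?z i) \<bullet> vdiv (gs i) (vsqrt (adam_v h gs i))) - (Df (?z i) \<bullet> C i)"
      have "L / 2 * (norm (- A i - B i - C i))\<^sup>2 \<le> L / 2 * (3 * ((norm (A i))\<^sup>2 + (norm (B i))\<^sup>2 + (norm (C i))\<^sup>2))"
        using a2 L by (intro mult_left_mono) auto
      then show ?thesis using a1 a3 by (simp add: algebra_simps)
    qed
  qed
  have "f (?z (t + 1)) - f (?z 1) = (\<Sum>i=1..t. f (?z (Suc i)) - f (?z i))"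
    using sum_Suc_diff[of 1 t "\<lambda>i. f (?z i)"] by simp
  also have "\<dots> \<le> (\<Sum>i=1..t. - (Df (?z i) \<bullet> A i) - alpha i * (Df (?z i) \<bullet> vdiv (gs i) (vsqrt (adam_v h gs i)))
      - (Df (?z i) \<bullet> C i) + 3 / 2 * L * (norm (C i))\<^sup>2 + 3 / 2 * L * (norm (A i))\<^sup>2
      + 3 / 2 * L * (norm (B i))\<^sup>2)"
    by (rule sum_mono) (rule step)
  finally show ?thesis
    by (simp add: A_def B_def C_def sum.distrib sum_subtractf sum_negf)
qed

theorem lemma2:
  fixes M :: "'a measure"
    and f :: "real^'n \<Rightarrow> real" and Df :: "real^'n \<Rightarrow> real^'n"
    and g :: "nat \<Rightarrow> 'a \<Rightarrow> real^'n"
    and x1 :: "real^'n" and alpha beta :: "nat \<Rightarrow> real"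
    and h :: "nat \<Rightarrow> (real^'n) list \<Rightarrow> real^'n"
    and L H G beta1 :: real and t :: nat
  assumes prob: "prob_space M"
    \<comment> \<open>(A1)\<close>
    and grad: "\<And>x. (f has_derivative (\<lambda>v. Df x \<bullet> v)) (at x)"
    and lip: "\<And>x y. norm (Df x - Df y) \<le> L * norm (x - y)"
    and min: "\<exists>xs. \<forall>x. f xs \<le> f x"
    \<comment> \<open>(A2)\<close>
    and gradbd: "\<And>x. norm (Df x) \<le> H"
    and gbd: "\<And>s. 1 \<le> s \<Longrightarrow> AE \<omega> in M. norm (g s \<omega>) \<le> H"
    \<comment> \<open>random variables and the maps h_t\<close>
    and gmeas: "\<And>s. g s \<in> borel_measurable M"
    and hpos: "\<And>s gs j. 1 \<le> s \<Longrightarrow> length gs = s \<Longrightarrow> 0 < h s gs $ j"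
    and hmeas: "\<And>s. 1 \<le> s \<Longrightarrow> (\<lambda>\<omega>. adam_v h (\<lambda>j. g j \<omega>) s) \<in> borel_measurable M"
    \<comment> \<open>(A3): the noise zeta_s = g_s - grad f(x_s) has zero mean conditionally on g_1..g_{s-1}\<close>
    and noise: "\<And>s k. 1 \<le> s \<Longrightarrow> AE \<omega> in M.
        real_cond_exp M (past_sigma M g s)
          (\<lambda>\<omega>. (g s \<omega> - Df (adam_x x1 alpha beta h (\<lambda>j. g j \<omega>) s)) $ k) \<omega> = 0"
    \<comment> \<open>(SH) and stepsizes\<close>
    and alpha_pos: "\<And>s. 1 \<le> s \<Longrightarrow> 0 < alpha s"
    and beta1: "0 \<le> beta1" "beta1 < 1"
    and beta_range: "\<And>s. 1 \<le> s \<Longrightarrow> 0 \<le> beta s \<and> beta s < 1"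
    and beta_le: "\<And>s. 1 \<le> s \<Longrightarrow> beta s \<le> beta1"
    and beta_mono: "\<And>r s. 1 \<le> r \<Longrightarrow> r \<le> s \<Longrightarrow> beta s \<le> beta r"
    and Gpos: "0 < G"
    and Gbd: "\<And>s. 1 \<le> s \<Longrightarrow> AE \<omega> in M.
        norm (alpha s *\<^sub>R vdiv (adam_m beta (\<lambda>j. g j \<omega>) s) (vsqrt (adam_v h (\<lambda>j. g j \<omega>) s))) \<le> G"
    \<comment> \<open>the expectations defining T_1, T_2, T_5, T_6 exist (tacit in the paper)\<close>
    and int1: "integrable M (\<lambda>\<omega>. \<Sum>i=1..t.
        Df (adam_z x1 alpha beta h (\<lambda>j. g j \<omega>) i) \<bullet>
          ((beta i / (1 - beta i)) *\<^sub>R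
             vmul (adam_rate alpha h (\<lambda>j. g j \<omega>) i - adam_rate alpha h (\<lambda>j. g j \<omega>) (i - 1))
                  (adam_m beta (\<lambda>j. g j \<omega>) (i - 1))))"
    and int2: "integrable M (\<lambda>\<omega>. \<Sum>i=1..t.
        alpha i * (Df (adam_z x1 alpha beta h (\<lambda>j. g j \<omega>) i) \<bullet>
          vdiv (g i \<omega>) (vsqrt (adam_v h (\<lambda>j. g j \<omega>) i))))"
    and int5: "integrable M (\<lambda>\<omega>. \<Sum>i=1..t.
        3 / 2 * L * (norm ((beta i / (1 - beta i)) *\<^sub>R
             vmul (adam_rate alpha h (\<lambda>j. g j \<omega>) i - adam_rate alpha h (\<lambda>j. g j \<omega>) (i - 1))
                  (adam_m beta (\<lambda>j. g j \<omega>) (i - 1))))\<^sup>2)"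
    and int6: "integrable M (\<lambda>\<omega>. \<Sum>i=1..t.
        3 / 2 * L * (norm (alpha i *\<^sub>R vdiv (g i \<omega>) (vsqrt (adam_v h (\<lambda>j. g j \<omega>) i))))\<^sup>2)"
    and t1: "1 \<le> t"
  shows "prob_space.expectation M (\<lambda>\<omega>.
            f (adam_z x1 alpha beta h (\<lambda>j. g j \<omega>) (t + 1)) - f (adam_z x1 alpha beta h (\<lambda>j. g j \<omega>) 1))
    \<le> - prob_space.expectation M (\<lambda>\<omega>. \<Sum>i=1..t.
          Df (adam_z x1 alpha beta h (\<lambda>j. g j \<omega>) i) \<bullet>
            ((beta i / (1 - beta i)) *\<^sub>R
               vmul (adam_rate alpha h (\<lambda>j. g j \<omega>) i - adam_rate alpha h (\<lambda>j. g j \<omega>) (i - 1))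
                    (adam_m beta (\<lambda>j. g j \<omega>) (i - 1))))
      - prob_space.expectation M (\<lambda>\<omega>. \<Sum>i=1..t.
          alpha i * (Df (adam_z x1 alpha beta h (\<lambda>j. g j \<omega>) i) \<bullet>
            vdiv (g i \<omega>) (vsqrt (adam_v h (\<lambda>j. g j \<omega>) i))))
      - prob_space.expectation M (\<lambda>\<omega>. \<Sum>i=1..t.
          Df (adam_z x1 alpha beta h (\<lambda>j. g j \<omega>) i) \<bullet>
            ((beta (i + 1) / (1 - beta (i + 1)) - beta i / (1 - beta i)) *\<^sub>R
               (alpha i *\<^sub>R vdiv (adam_m beta (\<lambda>j. g j \<omega>) i) (vsqrt (adam_v h (\<lambda>j. g j \<omega>) i)))))
      + prob_space.expectation M (\<lambda>\<omega>. \<Sum>i=1..t.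
          3 / 2 * L * (norm ((beta (i + 1) / (1 - beta (i + 1)) - beta i / (1 - beta i)) *\<^sub>R
               (alpha i *\<^sub>R vdiv (adam_m beta (\<lambda>j. g j \<omega>) i) (vsqrt (adam_v h (\<lambda>j. g j \<omega>) i)))))\<^sup>2)
      + prob_space.expectation M (\<lambda>\<omega>. \<Sum>i=1..t.
          3 / 2 * L * (norm ((beta i / (1 - beta i)) *\<^sub>R
               vmul (adam_rate alpha h (\<lambda>j. g j \<omega>) i - adam_rate alpha h (\<lambda>j. g j \<omega>) (i - 1))
                    (adam_m beta (\<lambda>j. g j \<omega>) (i - 1))))\<^sup>2)
      + prob_space.expectation M (\<lambda>\<omega>. \<Sum>i=1..t.
          3 / 2 * L * (norm (alpha i *\<^sub>R vdiv (g i \<omega>) (vsqrt (adam_v h (\<lambda>j. g j \<omega>) i))))\<^sup>2)"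
proof -
  interpret prob_space M by (rule prob)
  define LHS where "LHS = (\<lambda>\<omega>.
            f (adam_z x1 alpha beta h (\<lambda>j. g j \<omega>) (t + 1)) - f (adam_z x1 alpha beta h (\<lambda>j. g j \<omega>) 1))"
  define S1 where "S1 = (\<lambda>\<omega>. \<Sum>i=1..t.
          Df (adam_z x1 alpha beta h (\<lambda>j. g j \<omega>) i) \<bullet>
            ((beta i / (1 - beta i)) *\<^sub>R
               vmul (adam_rate alpha h (\<lambda>j. g j \<omega>) i - adam_rate alpha h (\<lambda>j. g j \<omega>) (i - 1))
                    (adam_m beta (\<lambda>j. g j \<omega>) (i - 1))))"
  define S2 where "S2 = (\<lambda>\<omega>. \<Sum>i=1..t.
          alpha i * (Df (adam_z x1 alpha beta h (\<lambda>j. g j \<omega>) i) \<bullet>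
            vdiv (g i \<omega>) (vsqrt (adam_v h (\<lambda>j. g j \<omega>) i))))"
  define S3 where "S3 = (\<lambda>\<omega>. \<Sum>i=1..t.
          Df (adam_z x1 alpha beta h (\<lambda>j. g j \<omega>) i) \<bullet>
            ((beta (i + 1) / (1 - beta (i + 1)) - beta i / (1 - beta i)) *\<^sub>R
               (alpha i *\<^sub>R vdiv (adam_m beta (\<lambda>j. g j \<omega>) i) (vsqrt (adam_v h (\<lambda>j. g j \<omega>) i)))))"
  define S4 where "S4 = (\<lambda>\<omega>. \<Sum>i=1..t.
          3 / 2 * L * (norm ((beta (i + 1) / (1 - beta (i + 1)) - beta i / (1 - beta i)) *\<^sub>R
               (alpha i *\<^sub>R vdiv (adam_m beta (\<lambda>j. g j \<omega>) i) (vsqrt (adam_v h (\<lambda>j. g j \<omega>) i)))))\<^sup>2)"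
  define S5 where "S5 = (\<lambda>\<omega>. \<Sum>i=1..t.
          3 / 2 * L * (norm ((beta i / (1 - beta i)) *\<^sub>R
               vmul (adam_rate alpha h (\<lambda>j. g j \<omega>) i - adam_rate alpha h (\<lambda>j. g j \<omega>) (i - 1))
                    (adam_m beta (\<lambda>j. g j \<omega>) (i - 1))))\<^sup>2)"
  define S6 where "S6 = (\<lambda>\<omega>. \<Sum>i=1..t.
          3 / 2 * L * (norm (alpha i *\<^sub>R vdiv (g i \<omega>) (vsqrt (adam_v h (\<lambda>j. g j \<omega>) i))))\<^sup>2)"
  have L: "0 \<le> L"
  proof -
    obtain k :: 'n where True by blast
    have "norm (Df 0 - Df (axis k 1)) \<le> L * norm (0 - axis k (1::real))" by (rule lip)
    moreover have "norm (0 - axis k (1::real)) = 1" by (simp add: norm_axis_1)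
    ultimately show ?thesis by (metis mult.right_neutral norm_ge_zero order_trans)
  qed
  have bet: "\<And>s. 1 \<le> s \<Longrightarrow> beta s \<noteq> 1" using beta_range by force
  define R where "R = (\<lambda>\<omega>. - S1 \<omega> - S2 \<omega> - S3 \<omega> + S4 \<omega> + S5 \<omega> + S6 \<omega>)"
  have pw: "LHS \<omega> \<le> R \<omega>" for \<omega>
    unfolding LHS_def R_def S1_def S2_def S3_def S4_def S5_def S6_def
    by (rule pathwise[OF grad lip L bet])
  have mm: "(\<lambda>\<omega>. adam_m beta (\<lambda>j. g j \<omega>) k) \<in> borel_measurable M" for k
    by (induct k) (auto intro!: borel_measurable_add borel_measurable_scaleR gmeas)
  have xm: "(\<lambda>\<omega>. adam_x x1 alpha beta h (\<lambda>j. g j \<omega>) k) \<in> borel_measurable M \<and>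
            (\<lambda>\<omega>. adam_x x1 alpha beta h (\<lambda>j. g j \<omega>) (Suc k)) \<in> borel_measurable M" for k
  proof (induct k)
    case 0 then show ?case by simp
  next
    case (Suc k)
    then show ?case
      by (auto simp del: adam_m.simps intro!: borel_measurable_diff borel_measurable_scaleR meas_vdiv meas_vsqrt mm hmeas)
  qed
  have zm: "(\<lambda>\<omega>. adam_z x1 alpha beta h (\<lambda>j. g j \<omega>) i) \<in> borel_measurable M" for i
    unfolding adam_z_def using xm
    by (auto intro!: borel_measurable_add borel_measurable_diff borel_measurable_scaleR)
  have cDf: "continuous_on UNIV Df"
  proof -
    have "L-lipschitz_on UNIV Df" using L lip by (auto simp: lipschitz_on_def dist_norm)
    then show ?thesis by (rule lipschitz_on_continuous_on)
  qed
  have cf: "continuous_on UNIV f"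
    using grad by (intro continuous_at_imp_continuous_on) (auto intro: has_derivative_continuous)
  have Dzm: "(\<lambda>\<omega>. Df (adam_z x1 alpha beta h (\<lambda>j. g j \<omega>) i)) \<in> borel_measurable M" for i
    using measurable_compose[OF zm borel_measurable_continuous_onI[OF cDf]] by (simp add: o_def)
  have fzm: "(\<lambda>\<omega>. f (adam_z x1 alpha beta h (\<lambda>j. g j \<omega>) i)) \<in> borel_measurable M" for i
    using measurable_compose[OF zm borel_measurable_continuous_onI[OF cf]] by (simp add: o_def)
  have um: "(\<lambda>\<omega>. alpha i *\<^sub>R vdiv (adam_m beta (\<lambda>j. g j \<omega>) i) (vsqrt (adam_v h (\<lambda>j. g j \<omega>) i)))
      \<in> borel_measurable M" if "1 \<le> i" for i
    using that by (auto intro!: borel_measurable_scaleR meas_vdiv meas_vsqrt mm hmeas)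
  have i3: "integrable M S3"
    unfolding S3_def
  proof (rule Bochner_Integration.integrable_sum)
    fix i assume i: "i \<in> {1..t}"
    have i1: "1 \<le> i" using i by simp
    let ?c = "beta (i + 1) / (1 - beta (i + 1)) - beta i / (1 - beta i)"
    show "integrable M (\<lambda>\<omega>. Df (adam_z x1 alpha beta h (\<lambda>j. g j \<omega>) i) \<bullet>
            (?c *\<^sub>R (alpha i *\<^sub>R vdiv (adam_m beta (\<lambda>j. g j \<omega>) i) (vsqrt (adam_v h (\<lambda>j. g j \<omega>) i)))))"
    proof (rule integrable_const_bound[where B="H * (\<bar>?c\<bar> * G)"])
      show "AE \<omega> in M. norm (Df (adam_z x1 alpha beta h (\<lambda>j. g j \<omega>) i) \<bullet>
            (?c *\<^sub>R (alpha i *\<^sub>R vdiv (adam_m beta (\<lambda>j. g j \<omega>) i) (vsqrt (adam_v h (\<lambda>j. g j \<omega>) i))))) \<le> H * (\<bar>?c\<bar> * G)"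
        using Gbd[OF i1]
      proof (eventually_elim)
        case (elim \<omega>)
        let ?u = "alpha i *\<^sub>R vdiv (adam_m beta (\<lambda>j. g j \<omega>) i) (vsqrt (adam_v h (\<lambda>j. g j \<omega>) i))"
        let ?D = "Df (adam_z x1 alpha beta h (\<lambda>j. g j \<omega>) i)"
        have "norm (?D \<bullet> (?c *\<^sub>R ?u)) \<le> norm ?D * norm (?c *\<^sub>R ?u)"
          unfolding real_norm_def by (rule Cauchy_Schwarz_ineq2)
        also have "\<dots> \<le> H * (\<bar>?c\<bar> * G)"
        proof -
          have H0: "0 \<le> H" using gradbd[of 0] norm_ge_zero order_trans by blast
          have n2: "norm (?c *\<^sub>R ?u) \<le> \<bar>?c\<bar> * G"
            unfolding norm_scaleR[of ?c ?u] using elim by (rule mult_left_mono) simp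
          show ?thesis by (rule mult_mono[OF gradbd n2 H0 norm_ge_zero])
        qed
        finally show ?case .
      qed
      show "(\<lambda>\<omega>. Df (adam_z x1 alpha beta h (\<lambda>j. g j \<omega>) i) \<bullet>
            (?c *\<^sub>R (alpha i *\<^sub>R vdiv (adam_m beta (\<lambda>j. g j \<omega>) i) (vsqrt (adam_v h (\<lambda>j. g j \<omega>) i)))))
          \<in> borel_measurable M"
        by (rule borel_measurable_inner[OF Dzm borel_measurable_scaleR[OF borel_measurable_const um[OF i1]]])
    qed
  qed
  have i4: "integrable M S4"
    unfolding S4_def
  proof (rule Bochner_Integration.integrable_sum)
    fix i assume i: "i \<in> {1..t}"
    have i1: "1 \<le> i" using i by simp
    let ?c = "beta (i + 1) / (1 - beta (i + 1)) - beta i / (1 - beta i)"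
    show "integrable M (\<lambda>\<omega>. 3 / 2 * L * (norm (?c *\<^sub>R
            (alpha i *\<^sub>R vdiv (adam_m beta (\<lambda>j. g j \<omega>) i) (vsqrt (adam_v h (\<lambda>j. g j \<omega>) i)))))\<^sup>2)"
    proof (rule integrable_const_bound[where B="3 / 2 * L * (\<bar>?c\<bar> * G)\<^sup>2"])
      show "AE \<omega> in M. norm (3 / 2 * L * (norm (?c *\<^sub>R
            (alpha i *\<^sub>R vdiv (adam_m beta (\<lambda>j. g j \<omega>) i) (vsqrt (adam_v h (\<lambda>j. g j \<omega>) i)))))\<^sup>2) \<le> 3 / 2 * L * (\<bar>?c\<bar> * G)\<^sup>2"
        using Gbd[OF i1]
      proof (eventually_elim)
        case (elim \<omega>)
        let ?u = "alpha i *\<^sub>R vdiv (adam_m beta (\<lambda>j. g j \<omega>) i) (vsqrt (adam_v h (\<lambda>j. g j \<omega>) i))"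
        have "norm (?c *\<^sub>R ?u) \<le> \<bar>?c\<bar> * G"
          unfolding norm_scaleR[of ?c ?u] using elim by (rule mult_left_mono) simp
        then have "(norm (?c *\<^sub>R ?u))\<^sup>2 \<le> (\<bar>?c\<bar> * G)\<^sup>2" by (simp add: power_mono)
        then have "3 / 2 * L * (norm (?c *\<^sub>R ?u))\<^sup>2 \<le> 3 / 2 * L * (\<bar>?c\<bar> * G)\<^sup>2"
          using L by (intro mult_left_mono) auto
        then show ?case using L by simp
      qed
      show "(\<lambda>\<omega>. 3 / 2 * L * (norm (?c *\<^sub>R
            (alpha i *\<^sub>R vdiv (adam_m beta (\<lambda>j. g j \<omega>) i) (vsqrt (adam_v h (\<lambda>j. g j \<omega>) i)))))\<^sup>2)
          \<in> borel_measurable M"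
        by (rule borel_measurable_times[OF borel_measurable_const borel_measurable_power[OF
              measurable_compose[OF borel_measurable_scaleR[OF borel_measurable_const um[OF i1]] borel_measurable_norm]]])
    qed
  qed
  have i1: "integrable M S1" using int1 unfolding S1_def .
  have i2: "integrable M S2" using int2 unfolding S2_def .
  have i5: "integrable M S5" using int5 unfolding S5_def .
  have i6: "integrable M S6" using int6 unfolding S6_def .
  have iR: "integrable M R" unfolding R_def using i1 i2 i3 i4 i5 i6 by auto
  obtain xs where xs: "\<forall>x. f xs \<le> f x" using min by blast
  have z1: "adam_z x1 alpha beta h gs 1 = x1" for gs by (simp add: adam_z_def)
  have iL: "integrable M LHS"
  proof (rule Bochner_Integration.integrable_bound[where f="\<lambda>\<omega>. \<bar>R \<omega>\<bar> + \<bar>f xs - f x1\<bar>"])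
    show "integrable M (\<lambda>\<omega>. \<bar>R \<omega>\<bar> + \<bar>f xs - f x1\<bar>)" using iR by auto
    show "LHS \<in> borel_measurable M" unfolding LHS_def by (auto intro!: borel_measurable_diff fzm)
    show "AE \<omega> in M. norm (LHS \<omega>) \<le> norm (\<bar>R \<omega>\<bar> + \<bar>f xs - f x1\<bar>)"
    proof (rule AE_I2)
      fix \<omega>
      have "f xs - f x1 \<le> LHS \<omega>" unfolding LHS_def z1 using xs by simp
      then show "norm (LHS \<omega>) \<le> norm (\<bar>R \<omega>\<bar> + \<bar>f xs - f x1\<bar>)" using pw[of \<omega>] by auto
    qed
  qed
  have "integral\<^sup>L M LHS \<le> integral\<^sup>L M R"
    by (rule integral_mono[OF iL iR]) (simp add: pw)
  also have "integral\<^sup>L M R = - integral\<^sup>L M S1 - integral\<^sup>L M S2 - integral\<^sup>L M S3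
      + integral\<^sup>L M S4 + integral\<^sup>L M S5 + integral\<^sup>L M S6"
    unfolding R_def using i1 i2 i3 i4 i5 i6 by simp
  finally have "integral\<^sup>L M LHS \<le> - integral\<^sup>L M S1 - integral\<^sup>L M S2 - integral\<^sup>L M S3
      + integral\<^sup>L M S4 + integral\<^sup>L M S5 + integral\<^sup>L M S6" .
  then show ?thesis unfolding LHS_def S1_def S2_def S3_def S4_def S5_def S6_def by simp
qed

end
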